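(* Let $X\in\mathbb{R}^{n\times p}$, $\beta_0\in\mathbb{R}^p$ with support $\{1,\dots,s\}$, $\lambda_0>0$, $\lambda>0$, $c_1\in[0,1)$ and $\kappa_0>0$. Assume $p_\lambda:[0,\infty)\to[0,\infty)$ is continuously differentiable on $(0,\infty)$, increasing and concave, with $p_\lambda(0)=0$, $p_\lambda(\infty)=\lim_{t\to\infty}p_\lambda(t)<\infty$, $p_\lambda'\{(1-c_1)\lambda\}\le\lambda_0/4$, and $\min_{1\le j\le s}|\beta_{0,j}|>\max\{(1-c_1)\lambda,\,2\kappa_0^{-1}p_\lambda^{1/2}(\infty)\}$. Assume $\min\{n^{-1/2}\|Xv\|_2:\|v\|_2=1,\|v\|_0<2s\}\ge\kappa_0$. Let $\widehat\beta\in\mathbb{R}^p$ be any vector each of whose components is either $0$ or of magnitude larger than $(1-c_1)\lambda$, and let $\delta=\widehat\beta-\beta_0$. Then $$\sum_{j=1}^p p_\lambda(|\beta_{0,j}|)-\sum_{j=1}^p p_\lambda(|\widehat\beta_j|)\le (4n)^{-1}\|X\delta\|_2^2+\tfrac14\lambda_0\|\delta\|_1.$$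
   Context: $\|v\|_0$ denotes the number of nonzero entries of $v$. *)

theory Defs
  imports "HOL-Analysis.Analysis"
begin

text \<open>Vectors in R^p are represented as functions nat => real, using only the
entries with index in {1..p}; an n x p matrix is a function nat => nat => real,
using only entries (i,j) with i in {1..n}, j in {1..p}.\<close>

definition l0norm :: "nat \<Rightarrow> (nat \<Rightarrow> real) \<Rightarrow> nat" where
  "l0norm p v = card {j \<in> {1..p}. v j \<noteq> 0}"

definition l1norm :: "nat \<Rightarrow> (nat \<Rightarrow> real) \<Rightarrow> real" where
  "l1norm p v = (\<Sum>j=1..p. \<bar>v j\<bar>)"

definition l2norm :: "nat \<Rightarrow> (nat \<Rightarrow> real) \<Rightarrow> real" where
  "l2norm p v = sqrt (\<Sum>j=1..p. (v j)\<^sup>2)"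

definition matvec :: "nat \<Rightarrow> (nat \<Rightarrow> nat \<Rightarrow> real) \<Rightarrow> (nat \<Rightarrow> real) \<Rightarrow> (nat \<Rightarrow> real)" where
  "matvec p X v = (\<lambda>i. \<Sum>j=1..p. X i j * v j)"

end

theory Submission
  imports Defs
begin

lemma concave_tangent:
  fixes f :: "real \<Rightarrow> real"
  assumes conc: "concave_on {0..} f" and t: "0 < t" and df: "f differentiable (at t)"
    and ty: "t < y"
  shows "(f y - f t) / (y - t) \<le> deriv f t"
proof -
  have D: "(f has_real_derivative deriv f t) (at t)"
    using df DERIV_deriv_iff_real_differentiable by blast
  hence "((\<lambda>z. (f z - f t) / (z - t)) \<longlongrightarrow> deriv f t) (at t)"
    using has_field_derivative_iff by blast
  hence lim: "((\<lambda>z. (f z - f t) / (z - t)) \<longlongrightarrow> deriv f t) (at_right t)"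
    by (simp add: filterlim_at_split)
  have cv: "convex_on {0..} (\<lambda>x. - f x)" using conc by (simp add: convex_on_iff_concave)
  have ev: "eventually (\<lambda>z. (f y - f t) / (y - t) \<le> (f z - f t) / (z - t)) (at_right t)"
    unfolding eventually_at_right_field
  proof (intro exI[of _ y] conjI allI impI)
    fix z assume z: "t < z" "z < y"
    have "((- f t) - (- f z)) / (t - z) \<le> ((- f t) - (- f y)) / (t - y)"
      using convex_on_slope_le(1)[OF cv, of t y z] z t ty by auto
    moreover have "((- f t) - (- f z)) / (t - z) = - ((f z - f t) / (z - t))"
      using z by (simp add: field_simps)
    moreover have "((- f t) - (- f y)) / (t - y) = - ((f y - f t) / (y - t))"
      using ty by (simp add: field_simps)
    ultimately show "(f y - f t) / (y - t) \<le> (f z - f t) / (z - t)" by linarith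
  qed (use ty in auto)
  show ?thesis
    by (rule tendsto_lowerbound[OF lim ev]) (simp add: trivial_limit_at_right_real)
qed

lemma concave_chord:
  fixes f :: "real \<Rightarrow> real"
  assumes conc: "concave_on {0..} f" and t: "0 < t" and df: "f differentiable (at t)"
    and tx: "t \<le> x" and xy: "x \<le> y"
  shows "f y - f x \<le> deriv f t * (y - x)"
proof (cases "x = y")
  case True thus ?thesis by simp
next
  case False
  hence xy': "x < y" using xy by simp
  have cv: "convex_on {0..} (\<lambda>x. - f x)" using conc by (simp add: convex_on_iff_concave)
  have tan: "(f y - f t) / (y - t) \<le> deriv f t"
    using concave_tangent[OF conc t df, of y] tx xy' by linarith
  have "(f y - f x) / (y - x) \<le> (f y - f t) / (y - t)"
  proof (cases "x = t")
    case True thus ?thesis by simp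
  next
    case False
    hence "t < x" using tx by simp
    have "((- f t) - (- f y)) / (t - y) \<le> ((- f x) - (- f y)) / (x - y)"
      using convex_on_slope_le(2)[OF cv, of t y x] \<open>t < x\<close> xy' t by auto
    moreover have "((- f t) - (- f y)) / (t - y) = - ((f y - f t) / (y - t))"
    proof -
      have "t - y \<noteq> 0" "y - t \<noteq> 0" using xy' \<open>t < x\<close> by auto
      thus ?thesis by (simp add: field_simps)
    qed
    moreover have "((- f x) - (- f y)) / (x - y) = - ((f y - f x) / (y - x))"
      using xy' by (simp add: field_simps)
    ultimately show ?thesis by linarith
  qed
  hence "(f y - f x) / (y - x) \<le> deriv f t" using tan by linarith
  thus ?thesis using xy' by (simp add: divide_le_eq mult.commute)
qed

lemma l2norm_div:
  "l2norm q (\<lambda>j. w j / a) = l2norm q w / \<bar>a\<bar>"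
  unfolding l2norm_def
  by (simp add: power_divide sum_divide_distrib[symmetric] real_sqrt_divide)

lemma matvec_div:
  "matvec p X (\<lambda>j. w j / a) = (\<lambda>i. matvec p X w i / a)"
  unfolding matvec_def by (simp add: sum_divide_distrib)

theorem mainTheorem6:
  fixes n p s :: nat
    and X :: "nat \<Rightarrow> nat \<Rightarrow> real"
    and beta0 betahat :: "nat \<Rightarrow> real"
    and lambda0 lambda c1 kappa0 pinf :: real
    and pen :: "real \<Rightarrow> real"
  assumes n_pos: "n \<ge> 1"
    and s_le: "s \<le> p"
    and supp: "\<forall>j\<in>{1..p}. beta0 j \<noteq> 0 \<longleftrightarrow> j \<in> {1..s}"
    and lambda0_pos: "lambda0 > 0" and lambda_pos: "lambda > 0"
    and c1: "0 \<le> c1" "c1 < 1"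
    and kappa0_pos: "kappa0 > 0"
    and pen_nonneg: "\<forall>t\<ge>0. pen t \<ge> 0"
    and pen_diff: "\<forall>t>0. pen differentiable (at t)"
    and pen_C1: "continuous_on {0<..} (deriv pen)"
    and pen_mono: "mono_on {0..} pen"
    and pen_concave: "concave_on {0..} pen"
    and pen_zero: "pen 0 = 0"
    and pen_lim: "(pen \<longlongrightarrow> pinf) at_top"
    and pen_deriv: "deriv pen ((1 - c1) * lambda) \<le> lambda0 / 4"
    and beta_min: "\<forall>j\<in>{1..s}. \<bar>beta0 j\<bar> > max ((1 - c1) * lambda) (2 / kappa0 * sqrt pinf)"
    and RE: "\<forall>v. l2norm p v = 1 \<and> l0norm p v < 2 * s \<longrightarrow>
               l2norm n (matvec p X v) / sqrt n \<ge> kappa0"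
    and betahat: "\<forall>j\<in>{1..p}. betahat j = 0 \<or> \<bar>betahat j\<bar> > (1 - c1) * lambda"
  shows "(\<Sum>j=1..p. pen \<bar>beta0 j\<bar>) - (\<Sum>j=1..p. pen \<bar>betahat j\<bar>)
           \<le> (l2norm n (matvec p X (\<lambda>j. betahat j - beta0 j)))\<^sup>2 / (4 * n)
             + lambda0 / 4 * l1norm p (\<lambda>j. betahat j - beta0 j)"
proof -
  define thr where "thr = (1 - c1) * lambda"
  define d where "d = deriv pen thr"
  define L where "L = lambda0 / 4"
  define del where "del = (\<lambda>j. betahat j - beta0 j)"
  define S where "S = {1..s}"
  define Z where "Z = {j\<in>S. betahat j = 0}"
  define N where "N = {j\<in>{1..p} - S. betahat j \<noteq> 0}"
  define k where "k = card Z"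
  define m where "m = card N"
  have thr_pos: "thr > 0" unfolding thr_def using c1 lambda_pos by simp
  have dL: "d \<le> L" unfolding d_def L_def thr_def using pen_deriv by simp
  have ch: "pen y - pen x \<le> d * (y - x)" if "thr \<le> x" "x \<le> y" for x y
    unfolding d_def using concave_chord[OF pen_concave thr_pos _ that] pen_diff thr_pos by blast
  have pmono: "pen x \<le> pen y" if "0 \<le> x" "x \<le> y" for x y
    using pen_mono that by (auto simp: mono_on_def)
  have d0: "d \<ge> 0"
    using ch[of thr "thr+1"] pmono[of thr "thr+1"] thr_pos by simp
  have pthr: "pen thr \<ge> 0" using pen_nonneg thr_pos by simp
  have pinf_ge: "pen b \<le> pinf" if "0 \<le> b" for b
  proof (rule tendsto_lowerbound[OF pen_lim])
    show "\<forall>\<^sub>F x in at_top. pen b \<le> pen x"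
      unfolding eventually_at_top_linorder using pmono that by blast
  qed simp
  have pinf0: "pinf \<ge> 0" using pinf_ge[of 0] pen_zero by simp
  have SZ: "Z \<subseteq> S" "S \<subseteq> {1..p}" "N \<subseteq> {1..p}" using s_le unfolding Z_def S_def N_def by auto
  have fin: "finite Z" "finite N" "finite S" unfolding Z_def N_def S_def by auto
  have b0S: "beta0 j \<noteq> 0" if "j \<in> S" for j using supp that SZ unfolding S_def by auto
  have b0nS: "beta0 j = 0" if "j \<in> {1..p}" "j \<notin> S" for j using supp that unfolding S_def by auto
  have bigS: "\<bar>beta0 j\<bar> > thr" "\<bar>beta0 j\<bar> > 2 / kappa0 * sqrt pinf" if "j \<in> S" for j
    using beta_min that unfolding S_def thr_def by auto
  have bh: "betahat j = 0 \<or> \<bar>betahat j\<bar> > thr" if "j \<in> {1..p}" for j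
    using betahat that unfolding thr_def by auto
  define T where "T = (\<lambda>j. pen \<bar>beta0 j\<bar> - pen \<bar>betahat j\<bar>)"
  have diff: "(\<Sum>j=1..p. pen \<bar>beta0 j\<bar>) - (\<Sum>j=1..p. pen \<bar>betahat j\<bar>) = (\<Sum>j=1..p. T j)"
    unfolding T_def by (simp add: sum_subtractf)
  have tA: "T j \<le> L * \<bar>del j\<bar>" if "j \<in> S" "betahat j \<noteq> 0" for j
  proof -
    have j: "j \<in> {1..p}" using that SZ by auto
    have h: "\<bar>betahat j\<bar> > thr" using bh[OF j] that by auto
    show ?thesis
    proof (cases "\<bar>betahat j\<bar> \<le> \<bar>beta0 j\<bar>")
      case True
      have "T j \<le> d * (\<bar>beta0 j\<bar> - \<bar>betahat j\<bar>)" unfolding T_def using ch[of "\<bar>betahat j\<bar>" "\<bar>beta0 j\<bar>"] h True by simp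
      also have "\<dots> \<le> d * \<bar>del j\<bar>" unfolding del_def using d0 by (intro mult_left_mono) auto
      also have "\<dots> \<le> L * \<bar>del j\<bar>" using dL by (intro mult_right_mono) auto
      finally show ?thesis .
    next
      case False
      hence "T j \<le> 0" unfolding T_def using pmono[of "\<bar>beta0 j\<bar>" "\<bar>betahat j\<bar>"] by simp
      also have "0 \<le> L * \<bar>del j\<bar>" using dL d0 by simp
      finally show ?thesis .
    qed
  qed
  have tZ1: "T j \<le> pinf" if "j \<in> Z" for j
    using that pinf_ge[of "\<bar>beta0 j\<bar>"] pen_zero unfolding T_def Z_def by simp
  have tZ2: "T j \<le> pen thr + L * \<bar>del j\<bar>" if "j \<in> Z" for j
  proof -
    have jS: "j \<in> S" and z: "betahat j = 0" using that unfolding Z_def by auto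
    have "T j - pen thr \<le> d * (\<bar>beta0 j\<bar> - thr)"
      unfolding T_def using ch[of thr "\<bar>beta0 j\<bar>"] bigS[OF jS] z pen_zero by simp
    also have "\<dots> \<le> d * \<bar>del j\<bar>" unfolding del_def using d0 z thr_pos by (intro mult_left_mono) auto
    also have "\<dots> \<le> L * \<bar>del j\<bar>" using dL by (intro mult_right_mono) auto
    finally show ?thesis by simp
  qed
  have tN: "T j \<le> - pen thr" if "j \<in> N" for j
  proof -
    have j: "j \<in> {1..p}" "j \<notin> S" "betahat j \<noteq> 0" using that unfolding N_def by auto
    have "\<bar>betahat j\<bar> > thr" using bh[OF j(1)] j by auto
    thus ?thesis unfolding T_def using b0nS[OF j(1,2)] pen_zero pmono[of thr "\<bar>betahat j\<bar>"] thr_pos by simp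
  qed
  have tO: "T j \<le> 0" if "j \<in> {1..p}" "j \<notin> S" "betahat j = 0" for j
    unfolding T_def using b0nS[OF that(1,2)] that(3) by simp
  have Lpos: "L \<ge> 0" using dL d0 by simp
  have Ld: "L * \<bar>del j\<bar> \<ge> 0" for j using Lpos by simp
  have l1: "l1norm p del = (\<Sum>j=1..p. \<bar>del j\<bar>)" unfolding l1norm_def ..
  have RHS0: "(l2norm n (matvec p X del))\<^sup>2 / (4 * n) \<ge> 0" by simp
  show ?thesis
  proof (cases "m < k")
    case False
    define g where "g = (\<lambda>j. (if j \<in> Z then pen thr else if j \<in> N then - pen thr else 0) + L * \<bar>del j\<bar>)"
    have "(\<Sum>j=1..p. T j) \<le> (\<Sum>j=1..p. g j)"
    proof (rule sum_mono)
      fix j assume j: "j \<in> {1..p}"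
      show "T j \<le> g j"
      proof -
        have ZN: "Z \<inter> N = {}" unfolding Z_def N_def by auto
        show ?thesis
        proof (cases "j \<in> Z")
          case True thus ?thesis unfolding g_def using tZ2 by simp
        next
          case nZ: False
          show ?thesis
          proof (cases "j \<in> N")
            case True
            have "0 \<le> L * \<bar>del j\<bar>" using Lpos by simp
            thus ?thesis unfolding g_def using tN[OF True] nZ True by simp
          next
            case nN: False
            show ?thesis
            proof (cases "j \<in> S")
              case True
              hence "betahat j \<noteq> 0" using nZ unfolding Z_def by auto
              thus ?thesis unfolding g_def using tA True nZ nN by simp
            next
              case False
              hence "betahat j = 0" using nN j unfolding N_def by auto
              thus ?thesis unfolding g_def using tO[of j] Ld[of j] j False nZ nN by simp
            qed
          qed
        qed
      qed
    qed
    also have "(\<Sum>j=1..p. g j) = (\<Sum>j=1..p. (if j \<in> Z then pen thr else if j \<in> N then - pen thr else 0)) + L * l1norm p del"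
      unfolding g_def l1 by (simp add: sum.distrib sum_distrib_left)
    also have "(\<Sum>j=1..p. (if j \<in> Z then pen thr else if j \<in> N then - pen thr else 0)) = k * pen thr - m * pen thr"
    proof -
      have ZN: "Z \<inter> N = {}" unfolding Z_def N_def by auto
      have "(\<Sum>j=1..p. (if j \<in> Z then pen thr else if j \<in> N then - pen thr else 0))
          = (\<Sum>j\<in>{1..p} \<inter> Z. pen thr) + (\<Sum>j\<in>{1..p} \<inter> -Z. (if j \<in> N then - pen thr else 0))"
        by (simp add: sum.If_cases)
      also have "\<dots> = k * pen thr + (\<Sum>j\<in>({1..p} \<inter> -Z) \<inter> N. - pen thr)"
        using SZ by (simp add: sum.If_cases k_def Int_absorb1 Int_commute[of _ Z] Int_absorb2)
      also have "({1..p} \<inter> -Z) \<inter> N = N" using SZ ZN by auto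
      finally show ?thesis by (simp add: m_def)
    qed
    also have "k * pen thr - m * pen thr \<le> 0"
    proof -
      have "real k \<le> real m" using False by simp
      thus ?thesis using pthr mult_right_mono[of "real k" "real m" "pen thr"] by linarith
    qed
    finally have "(\<Sum>j=1..p. T j) \<le> L * l1norm p del" by simp
    hence "(\<Sum>j=1..p. T j) \<le> (l2norm n (matvec p X del))\<^sup>2 / (4 * n) + L * l1norm p del"
      using RHS0 by linarith
    thus ?thesis using diff unfolding L_def del_def by simp
  next
    case True
    have "(\<Sum>j=1..p. T j) \<le> (\<Sum>j=1..p. (if j \<in> Z then pinf else 0) + L * \<bar>del j\<bar>)"
    proof (rule sum_mono)
      fix j assume j: "j \<in> {1..p}"
      show "T j \<le> (if j \<in> Z then pinf else 0) + L * \<bar>del j\<bar>"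
      proof (cases "j \<in> Z")
        case True thus ?thesis using tZ1[OF True] Ld[of j] by simp
      next
        case nZ: False
        show ?thesis
        proof (cases "j \<in> S")
          case True
          hence "betahat j \<noteq> 0" using nZ unfolding Z_def by auto
          thus ?thesis using tA True nZ by simp
        next
          case False
          have "T j \<le> 0"
          proof (cases "betahat j = 0")
            case True thus ?thesis using tO j False by simp
          next
            case F2: False
            hence "j \<in> N" using j False unfolding N_def by auto
            thus ?thesis using tN pthr by force
          qed
          thus ?thesis using nZ Ld[of j] by simp
        qed
      qed
    qed
    also have "\<dots> = k * pinf + L * l1norm p del"
    proof -
      have "Z \<inter> {1..p} = Z" using SZ by auto
      thus ?thesis unfolding l1 by (simp add: sum.distrib sum_distrib_left sum.If_cases k_def Int_commute[of _ Z])
    qed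
    finally have A: "(\<Sum>j=1..p. T j) \<le> k * pinf + L * l1norm p del" .
    define a where "a = l2norm p del"
    have sub: "{j\<in>{1..p}. del j \<noteq> 0} \<subseteq> S \<union> N"
    proof
      fix j assume "j \<in> {j\<in>{1..p}. del j \<noteq> 0}"
      hence j: "j \<in> {1..p}" "del j \<noteq> 0" by auto
      show "j \<in> S \<union> N"
      proof (rule ccontr)
        assume "j \<notin> S \<union> N"
        hence "j \<notin> S" "j \<notin> N" by auto
        hence "betahat j = 0" using j unfolding N_def by auto
        thus False using j b0nS[OF j(1) \<open>j \<notin> S\<close>] unfolding del_def by simp
      qed
    qed
    have kS: "k \<le> s" unfolding k_def using card_mono[OF fin(3) SZ(1)] by (simp add: S_def)
    have l0: "l0norm p del < 2 * s"
    proof -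
      have "l0norm p del \<le> card (S \<union> N)" unfolding l0norm_def using sub fin by (intro card_mono) auto
      also have "\<dots> \<le> card S + card N" by (rule card_Un_le)
      also have "\<dots> < 2 * s" using True kS unfolding m_def S_def by simp
      finally show ?thesis .
    qed
    have k1: "k \<ge> 1" using True by simp
    then obtain j0 where j0: "j0 \<in> Z" unfolding k_def by (metis card.empty ex_in_conv not_one_le_zero)
    have sq_ge: "(beta0 j)\<^sup>2 \<ge> 4 * pinf / kappa0\<^sup>2" if "j \<in> Z" for j
    proof -
      have jS: "j \<in> S" using that SZ by auto
      have "0 \<le> 2 / kappa0 * sqrt pinf" using kappa0_pos pinf0 by simp
      hence "(2 / kappa0 * sqrt pinf)\<^sup>2 \<le> \<bar>beta0 j\<bar>\<^sup>2"
        using bigS(2)[OF jS] by (intro power_mono) auto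
      thus ?thesis using pinf0 by (simp add: power_mult_distrib power_divide)
    qed
    have sumsq: "a\<^sup>2 = (\<Sum>j=1..p. (del j)\<^sup>2)" unfolding a_def l2norm_def
      by (simp add: sum_nonneg)
    have "(\<Sum>j\<in>Z. (del j)\<^sup>2) \<le> (\<Sum>j=1..p. (del j)\<^sup>2)"
      using SZ by (intro sum_mono2) auto
    moreover have "(\<Sum>j\<in>Z. (del j)\<^sup>2) \<ge> (\<Sum>j\<in>Z. 4 * pinf / kappa0\<^sup>2)"
      using sq_ge by (intro sum_mono) (auto simp: del_def Z_def)
    ultimately have a2: "a\<^sup>2 \<ge> k * (4 * pinf / kappa0\<^sup>2)" using sumsq by (simp add: k_def)
    have apos: "a > 0"
    proof -
      have "(del j0)\<^sup>2 > 0" using j0 b0S SZ unfolding del_def Z_def by auto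
      moreover have "(\<Sum>j\<in>{j0}. (del j)\<^sup>2) \<le> (\<Sum>j=1..p. (del j)\<^sup>2)"
        using j0 SZ by (intro sum_mono2) auto
      hence "(del j0)\<^sup>2 \<le> (\<Sum>j=1..p. (del j)\<^sup>2)" by simp
      ultimately have "a\<^sup>2 > 0" using sumsq by linarith
      moreover have "a \<ge> 0" unfolding a_def l2norm_def by (simp add: sum_nonneg)
      ultimately show ?thesis by (metis less_eq_real_def power_zero_numeral)
    qed
    define v where "v = (\<lambda>j. del j / a)"
    have "l2norm p v = 1" unfolding v_def l2norm_div using apos by (simp add: a_def)
    moreover have "l0norm p v = l0norm p del" unfolding l0norm_def v_def using apos by simp
    ultimately have "l2norm n (matvec p X v) / sqrt n \<ge> kappa0" using RE l0 by auto
    moreover have "l2norm n (matvec p X v) = l2norm n (matvec p X del) / a"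
      unfolding v_def matvec_div using l2norm_div[of n "matvec p X del" a] apos by simp
    ultimately have "kappa0 \<le> l2norm n (matvec p X del) / (a * sqrt n)" by simp
    moreover have an: "a * sqrt n > 0" using apos n_pos by simp
    ultimately have "kappa0 * (a * sqrt n) \<le> l2norm n (matvec p X del)"
      by (simp add: le_divide_eq)
    hence "(kappa0 * (a * sqrt n))\<^sup>2 \<le> (l2norm n (matvec p X del))\<^sup>2"
      using kappa0_pos an by (intro power_mono) auto
    hence B: "kappa0\<^sup>2 * a\<^sup>2 * n \<le> (l2norm n (matvec p X del))\<^sup>2"
      by (simp add: power_mult_distrib)
    have "kappa0\<^sup>2 * a\<^sup>2 \<ge> kappa0\<^sup>2 * (k * (4 * pinf / kappa0\<^sup>2))"
      using a2 by (intro mult_left_mono) auto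
    also have "kappa0\<^sup>2 * (k * (4 * pinf / kappa0\<^sup>2)) = 4 * k * pinf" using kappa0_pos by simp
    finally have "4 * k * pinf * n \<le> (l2norm n (matvec p X del))\<^sup>2"
      using B n_pos by (meson mult_right_mono of_nat_0_le_iff order_trans)
    hence "k * pinf \<le> (l2norm n (matvec p X del))\<^sup>2 / (4 * n)"
      using n_pos by (simp add: le_divide_eq mult_ac)
    hence "(\<Sum>j=1..p. T j) \<le> (l2norm n (matvec p X del))\<^sup>2 / (4 * n) + L * l1norm p del"
      using A by linarith
    thus ?thesis using diff unfolding L_def del_def by simp
  qed
qed

end
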